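(* Let $H=(E,\{X_i:i\in[n]\})$ be a hypergraph such that $|X_i\cap X_j|\le1$ for all distinct $i,j\in[n]$, and such that there are no $a,b,c\in E$ with $\{a,b\},\{a,c\},\{b,c\}$ all hyperedges. Let $\rho(A)=\sum_{i=1}^n\min\{|A\cap X_i|,1\}$ for $A\subseteq E$. Fix an integer $s$ with $\max\{\rho(A): A\subseteq E,\ |A|\le4\}\le s<\rho(E)$. If the truncation $T(\rho,s)$ is $k$-decomposable, then there is a proper $k$-coloring $c$ of the line graph $G_H$ with $s\ge c_1+2c_2^+$. If $s<\chi(G_H)$, then $T(\rho,s)$ is indecomposable.
   Context: A polymatroid on a finite set $E$ is a function $\rho:2^E\to\mathbb{Z}$ that is normalized, non-decreasing and submodular. A hypergraph is $H=(E,\mathcal{E})$ with $E$ finite and $\mathcal{E}=\{X_i:i\in[n]\}$ a set of nonempty subsets of $E$. The line graph $G_H$ has vertex set $[n]$ with $ij$ an edge iff $i\ne j$ and $X_i\cap X_j\ne\emptyset$. The truncation $T(\rho,s)$ is the polymatroid $X\mapsto\min\{\rho(X),s\}$. A polymatroid is $k$-decomposable if it equals $r_{M_1}+\cdots+r_{M_k}$ for matroids $M_1,\dots,M_k$ on its ground set, and indecomposable if it is not $k$-decomposable for any $k$. For a proper coloring $c:[n]\to[k]$, $c_1$ (resp. $c_2^+$) is the number of $i\in[k]$ with $|c^{-1}(i)|=1$ (resp. $\ge2$). *)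

theory Defs
  imports Main
begin

definition matroid :: "'a set \<Rightarrow> 'a set set \<Rightarrow> bool" where
  "matroid E \<I> \<longleftrightarrow> finite E \<and> (\<forall>I\<in>\<I>. I \<subseteq> E) \<and> {} \<in> \<I>
     \<and> (\<forall>I J. J \<in> \<I> \<and> I \<subseteq> J \<longrightarrow> I \<in> \<I>)
     \<and> (\<forall>I J. I \<in> \<I> \<and> J \<in> \<I> \<and> card I < card J \<longrightarrow> (\<exists>x\<in>J - I. insert x I \<in> \<I>))"

definition matroid_rank :: "'a set set \<Rightarrow> 'a set \<Rightarrow> int" where
  "matroid_rank \<I> X = int (Max (card ` {Y. Y \<subseteq> X \<and> Y \<in> \<I>}))"

definition truncation :: "('a set \<Rightarrow> int) \<Rightarrow> int \<Rightarrow> 'a set \<Rightarrow> int" where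
  "truncation \<rho> s = (\<lambda>X. min (\<rho> X) s)"

definition k_decomposable :: "'a set \<Rightarrow> ('a set \<Rightarrow> int) \<Rightarrow> nat \<Rightarrow> bool" where
  "k_decomposable E \<rho> k \<longleftrightarrow>
     (\<exists>M :: nat \<Rightarrow> 'a set set. (\<forall>j\<in>{1..k}. matroid E (M j))
        \<and> (\<forall>X. X \<subseteq> E \<longrightarrow> \<rho> X = (\<Sum>j\<in>{1..k}. matroid_rank (M j) X)))"

definition indecomposable :: "'a set \<Rightarrow> ('a set \<Rightarrow> int) \<Rightarrow> bool" where
  "indecomposable E \<rho> \<longleftrightarrow> (\<forall>k. \<not> k_decomposable E \<rho> k)"

definition hypergraph :: "'a set \<Rightarrow> nat \<Rightarrow> (nat \<Rightarrow> 'a set) \<Rightarrow> bool" where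
  "hypergraph E n X \<longleftrightarrow> finite E \<and> (\<forall>i\<in>{1..n}. X i \<noteq> {} \<and> X i \<subseteq> E) \<and> inj_on X {1..n}"

definition hyp_rho :: "nat \<Rightarrow> (nat \<Rightarrow> 'a set) \<Rightarrow> 'a set \<Rightarrow> int" where
  "hyp_rho n X A = (\<Sum>i\<in>{1..n}. min (int (card (A \<inter> X i))) 1)"

definition line_adj :: "(nat \<Rightarrow> 'a set) \<Rightarrow> nat \<Rightarrow> nat \<Rightarrow> bool" where
  "line_adj X i j \<longleftrightarrow> i \<noteq> j \<and> X i \<inter> X j \<noteq> {}"

definition proper_coloring :: "nat \<Rightarrow> (nat \<Rightarrow> 'a set) \<Rightarrow> nat \<Rightarrow> (nat \<Rightarrow> nat) \<Rightarrow> bool" where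
  "proper_coloring n X k c \<longleftrightarrow> (\<forall>i\<in>{1..n}. c i \<in> {1..k})
     \<and> (\<forall>i\<in>{1..n}. \<forall>j\<in>{1..n}. line_adj X i j \<longrightarrow> c i \<noteq> c j)"

definition chromatic_number :: "nat \<Rightarrow> (nat \<Rightarrow> 'a set) \<Rightarrow> nat" where
  "chromatic_number n X = (LEAST k. \<exists>c. proper_coloring n X k c)"

definition color_c1 :: "nat \<Rightarrow> nat \<Rightarrow> (nat \<Rightarrow> nat) \<Rightarrow> nat" where
  "color_c1 n k c = card {l\<in>{1..k}. card {i\<in>{1..n}. c i = l} = 1}"

definition color_c2plus :: "nat \<Rightarrow> nat \<Rightarrow> (nat \<Rightarrow> nat) \<Rightarrow> nat" where
  "color_c2plus n k c = card {l\<in>{1..k}. card {i\<in>{1..n}. c i = l} \<ge> 2}"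

end

theory Submission
  imports Defs
begin

definition mrk :: "'a set set \<Rightarrow> 'a set \<Rightarrow> nat" where
  "mrk I A = Max (card ` {Y. Y \<subseteq> A \<and> Y \<in> I})"

lemma mr_eq: "matroid_rank I A = int (mrk I A)"
  by (simp add: matroid_rank_def mrk_def)

lemma m_fin: "matroid E I \<Longrightarrow> finite {Y. Y \<subseteq> A \<and> Y \<in> I}"
proof -
  assume m: "matroid E I"
  have "{Y. Y \<subseteq> A \<and> Y \<in> I} \<subseteq> Pow E" using m unfolding matroid_def by auto
  moreover have "finite (Pow E)" using m unfolding matroid_def by auto
  ultimately show ?thesis using finite_subset by blast
qed

lemma m_le: "matroid E I \<Longrightarrow> Y \<subseteq> A \<Longrightarrow> Y \<in> I \<Longrightarrow> card Y \<le> mrk I A"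
  unfolding mrk_def by (intro Max_ge) (auto intro: finite_imageI m_fin)

lemma m_ex: "matroid E I \<Longrightarrow> \<exists>Y. Y \<subseteq> A \<and> Y \<in> I \<and> card Y = mrk I A"
proof -
  assume m: "matroid E I"
  have "{} \<in> I" using m unfolding matroid_def by auto
  hence ne: "card ` {Y. Y \<subseteq> A \<and> Y \<in> I} \<noteq> {}" by auto
  have "mrk I A \<in> card ` {Y. Y \<subseteq> A \<and> Y \<in> I}"
    unfolding mrk_def using m_fin[OF m] ne by (intro Max_in) auto
  thus ?thesis by auto
qed

lemma m_aug: assumes "matroid E I" "J1 \<in> I" "J \<in> I" "card J1 < card J"
  shows "\<exists>x\<in>J - J1. insert x J1 \<in> I"
proof -
  have "\<forall>I1 J. I1 \<in> I \<and> J \<in> I \<and> card I1 < card J \<longrightarrow> (\<exists>x\<in>J - I1. insert x I1 \<in> I)"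
    using assms(1) unfolding matroid_def by (elim conjE)
  thus ?thesis using assms(2-4) by blast
qed

lemma m_sub: assumes "matroid E I" "K \<in> I" "J \<subseteq> K" shows "J \<in> I"
proof -
  have "\<forall>I1 J. J \<in> I \<and> I1 \<subseteq> J \<longrightarrow> I1 \<in> I"
    using assms(1) unfolding matroid_def by (elim conjE)
  thus ?thesis using assms(2-3) by blast
qed

lemma m_indep_fin: "matroid E I \<Longrightarrow> J \<in> I \<Longrightarrow> finite J"
proof -
  assume m: "matroid E I" and J: "J \<in> I"
  have "J \<subseteq> E" "finite E" using m J unfolding matroid_def by auto
  thus ?thesis using finite_subset by blast
qed

lemma m_extend_aux:
  assumes m: "matroid E I"
  shows "\<And>J. mrk I A - card J = d \<Longrightarrow> J \<in> I \<Longrightarrow> J \<subseteq> A \<Longrightarrow>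
     \<exists>K. J \<subseteq> K \<and> K \<subseteq> A \<and> K \<in> I \<and> card K = mrk I A"
proof (induction d)
  case 0
  have "card J \<le> mrk I A" using m_le[OF m 0(3) 0(2)] .
  thus ?case using 0 by (intro exI[of _ J]) auto
next
  case (Suc d)
  obtain Y where Y: "Y \<subseteq> A" "Y \<in> I" "card Y = mrk I A" using m_ex[OF m] by blast
  have "card J < card Y" using Suc.prems Y by auto
  then obtain x where x: "x \<in> Y - J" "insert x J \<in> I"
    using m_aug[OF m Suc.prems(2) Y(2)] by blast
  have fJ: "finite J" using m_indep_fin[OF m Suc.prems(2)] .
  have "mrk I A - card (insert x J) = d" using Suc.prems(1) x fJ by auto
  from Suc.IH[OF this x(2)] obtain K where "insert x J \<subseteq> K" "K \<subseteq> A" "K \<in> I" "card K = mrk I A"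
    using x Y Suc.prems(3) by auto
  thus ?case by (intro exI[of _ K]) auto
qed

lemma m_extend: "matroid E I \<Longrightarrow> J \<in> I \<Longrightarrow> J \<subseteq> A \<Longrightarrow>
     \<exists>K. J \<subseteq> K \<and> K \<subseteq> A \<and> K \<in> I \<and> card K = mrk I A"
  by (rule m_extend_aux[OF _ refl])


lemma m_submod:
  assumes m: "matroid E I"
  shows "mrk I (A \<union> B) + mrk I (A \<inter> B) \<le> mrk I A + mrk I B"
proof -
  obtain J where J: "J \<subseteq> A \<inter> B" "J \<in> I" "card J = mrk I (A \<inter> B)" using m_ex[OF m] by blast
  obtain K where K: "J \<subseteq> K" "K \<subseteq> A \<union> B" "K \<in> I" "card K = mrk I (A \<union> B)"
    using m_extend[OF m J(2), of "A \<union> B"] J(1) by auto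
  have fK: "finite K" using m_indep_fin[OF m K(3)] .
  have a: "card (K \<inter> A) \<le> mrk I A" by (rule m_le[OF m _ m_sub[OF m K(3)]]) auto
  have b: "card (K \<inter> B) \<le> mrk I B" by (rule m_le[OF m _ m_sub[OF m K(3)]]) auto
  have c: "card J \<le> card (K \<inter> A \<inter> B)" using J(1) K(1) fK by (intro card_mono) auto
  have u: "(K \<inter> A) \<union> (K \<inter> B) = K" using K(2) by auto
  have "card ((K \<inter> A) \<union> (K \<inter> B)) + card ((K \<inter> A) \<inter> (K \<inter> B)) = card (K \<inter> A) + card (K \<inter> B)"
    using card_Un_Int[of "K \<inter> A" "K \<inter> B"] fK by auto
  moreover have "(K \<inter> A) \<inter> (K \<inter> B) = K \<inter> A \<inter> B" by auto
  ultimately have "card K + card (K \<inter> A \<inter> B) = card (K \<inter> A) + card (K \<inter> B)" using u by simp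
  thus ?thesis using a b c J(3) K(4) by linarith
qed

lemma m_mono: "matroid E I \<Longrightarrow> A \<subseteq> B \<Longrightarrow> mrk I A \<le> mrk I B"
proof -
  assume m: "matroid E I" and s: "A \<subseteq> B"
  obtain Y where "Y \<subseteq> A" "Y \<in> I" "card Y = mrk I A" using m_ex[OF m] by blast
  thus ?thesis using m_le[OF m, of Y B] s by auto
qed

lemma m_empty: "matroid E I \<Longrightarrow> mrk I {} = 0"
proof -
  assume m: "matroid E I"
  obtain Y where "Y \<subseteq> {}" "Y \<in> I" "card Y = mrk I {}" using m_ex[OF m] by blast
  thus ?thesis by auto
qed

lemma m_single: "matroid E I \<Longrightarrow> mrk I {a} \<le> 1"
proof -
  assume m: "matroid E I"
  obtain Y where "Y \<subseteq> {a}" "Y \<in> I" "card Y = mrk I {a}" using m_ex[OF m] by blast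
  moreover have "card Y \<le> card {a}" using \<open>Y \<subseteq> {a}\<close> by (intro card_mono) auto
  ultimately show ?thesis by simp
qed


locale dec =
  fixes E :: "'a set" and n :: nat and X :: "nat \<Rightarrow> 'a set" and s :: int
    and k :: nat and M :: "nat \<Rightarrow> 'a set set"
  assumes hyp: "hypergraph E n X"
    and lin: "\<forall>i\<in>{1..n}. \<forall>j\<in>{1..n}. i \<noteq> j \<longrightarrow> card (X i \<inter> X j) \<le> 1"
    and notri: "\<not> (\<exists>a\<in>E. \<exists>b\<in>E. \<exists>c\<in>E. a \<noteq> b \<and> a \<noteq> c \<and> b \<noteq> c \<and>
                   {a, b} \<in> X ` {1..n} \<and> {a, c} \<in> X ` {1..n} \<and> {b, c} \<in> X ` {1..n})"
    and s_lower: "\<forall>A. A \<subseteq> E \<and> card A \<le> 4 \<longrightarrow> hyp_rho n X A \<le> s"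
    and s_upper: "s < hyp_rho n X E"
    and mat: "\<forall>j\<in>{1..k}. matroid E (M j)"
    and decomp: "\<forall>Y. Y \<subseteq> E \<longrightarrow> truncation (hyp_rho n X) s Y = (\<Sum>j\<in>{1..k}. matroid_rank (M j) Y)"
begin

definition r :: "nat \<Rightarrow> 'a set \<Rightarrow> int" where "r j A = int (mrk (M j) A)"

lemma matj: "j \<in> {1..k} \<Longrightarrow> matroid E (M j)" using mat by auto

lemma r_submod: "j \<in> {1..k} \<Longrightarrow> r j (A \<union> B) + r j (A \<inter> B) \<le> r j A + r j B"
  unfolding r_def using m_submod[OF matj] by (metis of_nat_add of_nat_le_iff)

lemma r_mono: "j \<in> {1..k} \<Longrightarrow> A \<subseteq> B \<Longrightarrow> r j A \<le> r j B"
  unfolding r_def using m_mono[OF matj] by simp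

lemma r_empty: "j \<in> {1..k} \<Longrightarrow> r j {} = 0"
  unfolding r_def using m_empty[OF matj] by simp

lemma r_nonneg: "0 \<le> r j A" unfolding r_def by simp

lemma r_single: "j \<in> {1..k} \<Longrightarrow> r j {a} \<le> 1"
  unfolding r_def using m_single[OF matj] by simp

lemma r_insert: "j \<in> {1..k} \<Longrightarrow> r j (insert a A) \<le> r j A + r j {a}"
  using r_submod[of j A "{a}"] r_nonneg[of j "A \<inter> {a}"] by simp

definition H :: "'a \<Rightarrow> nat set" where "H e = {i\<in>{1..n}. e \<in> X i}"

lemma H_fin: "finite (H e)" unfolding H_def by auto

lemma Xprop: "i \<in> {1..n} \<Longrightarrow> finite (X i) \<and> X i \<subseteq> E \<and> X i \<noteq> {}"
  using hyp unfolding hypergraph_def by (meson finite_subset)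

lemma finE: "finite E" using hyp unfolding hypergraph_def by auto

lemma rho_eq: "A \<subseteq> E \<Longrightarrow> hyp_rho n X A = int (card (\<Union>x\<in>A. H x))"
proof -
  assume A: "A \<subseteq> E"
  have "hyp_rho n X A = (\<Sum>i\<in>{1..n}. of_bool (A \<inter> X i \<noteq> {}))"
    unfolding hyp_rho_def
  proof (rule sum.cong)
    fix i assume i: "i \<in> {1..n}"
    have "finite (A \<inter> X i)" using Xprop[OF i] by auto
    thus "min (int (card (A \<inter> X i))) 1 = of_bool (A \<inter> X i \<noteq> {})"
      by (cases "A \<inter> X i = {}") (auto simp: card_gt_0_iff Suc_le_eq)
  qed simp
  also have "\<dots> = int (card ({1..n} \<inter> {i. A \<inter> X i \<noteq> {}}))" by simp
  also have "{1..n} \<inter> {i. A \<inter> X i \<noteq> {}} = (\<Union>x\<in>A. H x)" unfolding H_def by auto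
  finally show ?thesis .
qed

lemma trunc_small: "A \<subseteq> E \<Longrightarrow> card A \<le> 4 \<Longrightarrow> (\<Sum>j\<in>{1..k}. r j A) = int (card (\<Union>x\<in>A. H x))"
proof -
  assume A: "A \<subseteq> E" "card A \<le> 4"
  have "hyp_rho n X A \<le> s" using s_lower A by auto
  hence "(\<Sum>j\<in>{1..k}. matroid_rank (M j) A) = hyp_rho n X A"
    using decomp A unfolding truncation_def by auto
  thus ?thesis using rho_eq[OF A(1)] unfolding r_def mr_eq by simp
qed

lemma trunc_E: "(\<Sum>j\<in>{1..k}. r j E) = s"
proof -
  have "(\<Sum>j\<in>{1..k}. matroid_rank (M j) E) = min (hyp_rho n X E) s"
    using decomp unfolding truncation_def by auto
  thus ?thesis using s_upper unfolding r_def mr_eq by simp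
qed

definition D :: "nat \<Rightarrow> 'a set \<Rightarrow> int" where "D j A = (\<Sum>x\<in>A. r j {x}) - r j A"
definition N :: "'a set \<Rightarrow> int" where
  "N A = (\<Sum>x\<in>A. int (card (H x))) - int (card (\<Union>x\<in>A. H x))"

lemma sumD: "A \<subseteq> E \<Longrightarrow> card A \<le> 4 \<Longrightarrow> (\<Sum>j\<in>{1..k}. D j A) = N A"
proof -
  assume A: "A \<subseteq> E" "card A \<le> 4"
  have "(\<Sum>j\<in>{1..k}. D j A) = (\<Sum>j\<in>{1..k}. \<Sum>x\<in>A. r j {x}) - (\<Sum>j\<in>{1..k}. r j A)"
    unfolding D_def by (simp add: sum_subtractf)
  also have "(\<Sum>j\<in>{1..k}. \<Sum>x\<in>A. r j {x}) = (\<Sum>x\<in>A. \<Sum>j\<in>{1..k}. r j {x})" by (rule sum.swap)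
  also have "\<dots> = (\<Sum>x\<in>A. int (card (H x)))"
  proof (rule sum.cong)
    fix x assume "x \<in> A"
    hence "{x} \<subseteq> E" using A by auto
    thus "(\<Sum>j\<in>{1..k}. r j {x}) = int (card (H x))" using trunc_small[of "{x}"] by simp
  qed simp
  finally show ?thesis using trunc_small[OF A] unfolding N_def by simp
qed

lemma N_insert: "finite A \<Longrightarrow> a \<notin> A \<Longrightarrow> N (insert a A) = N A + int (card (H a \<inter> (\<Union>x\<in>A. H x)))"
proof -
  assume A: "finite A" "a \<notin> A"
  have f: "finite (\<Union>x\<in>A. H x)" using A H_fin by auto
  have "card (H a \<union> (\<Union>x\<in>A. H x)) + card (H a \<inter> (\<Union>x\<in>A. H x)) = card (H a) + card (\<Union>x\<in>A. H x)"
    using card_Un_Int[OF H_fin f, of a] by simp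
  thus ?thesis unfolding N_def using A by simp
qed

lemma N_single: "N {a} = 0" unfolding N_def by simp

lemma D_insert: "j \<in> {1..k} \<Longrightarrow> finite A \<Longrightarrow> a \<notin> A \<Longrightarrow> D j A \<le> D j (insert a A) \<and> D j (insert a A) \<le> D j A + 1"
  unfolding D_def using r_insert[of j a A] r_mono[of j A "insert a A", OF _ subset_insertI] r_single[of j a] by auto

lemma D_nonneg: assumes j: "j \<in> {1..k}" shows "finite A \<Longrightarrow> 0 \<le> D j A"
proof (induction A rule: finite_induct)
  case empty thus ?case unfolding D_def using r_empty[OF j] by simp
next
  case (insert a A) thus ?case using D_insert[OF j, of A a] by simp
qed

lemma D_super: "j \<in> {1..k} \<Longrightarrow> finite A \<Longrightarrow> finite B \<Longrightarrow> D j A + D j B \<le> D j (A \<union> B) + D j (A \<inter> B)"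
  unfolding D_def using r_submod[of j A B] sum.union_inter[of A B "\<lambda>x. r j {x}"] by simp

definition par :: "nat \<Rightarrow> 'a \<Rightarrow> 'a \<Rightarrow> bool" where
  "par j a b \<longleftrightarrow> r j {a} = 1 \<and> r j {b} = 1 \<and> r j {a, b} = 1"

lemma D_pair: "j \<in> {1..k} \<Longrightarrow> a \<noteq> b \<Longrightarrow> D j {a, b} = of_bool (par j a b)"
proof -
  assume j: "j \<in> {1..k}" and ab: "a \<noteq> b"
  have 1: "r j {a} \<le> r j {a,b}" "r j {b} \<le> r j {a,b}" using r_mono[OF j] by auto
  have 2: "r j {a,b} \<le> r j {a} + r j {b}" using r_insert[OF j, of a "{b}"] by simp
  have 3: "0 \<le> r j {a}" "0 \<le> r j {b}" "r j {a} \<le> 1" "r j {b} \<le> 1" using r_nonneg r_single[OF j] by auto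
  show ?thesis unfolding D_def par_def using ab 1 2 3 by auto
qed


lemma D_mono_aux: assumes j: "j \<in> {1..k}" and A: "finite A" shows "finite C \<Longrightarrow> D j A \<le> D j (A \<union> C)"
proof (induction C rule: finite_induct)
  case empty thus ?case by simp
next
  case (insert c C)
  show ?case
  proof (cases "c \<in> A \<union> C")
    case True
    hence "A \<union> insert c C = A \<union> C" by auto
    thus ?thesis using insert by simp
  next
    case False
    have "A \<union> insert c C = insert c (A \<union> C)" by auto
    thus ?thesis using insert D_insert[OF j, of "A \<union> C" c] False A by simp
  qed
qed

lemma D_mono: "j \<in> {1..k} \<Longrightarrow> A \<subseteq> B \<Longrightarrow> finite B \<Longrightarrow> D j A \<le> D j B"
  using D_mono_aux[of j A B] by (metis finite_subset sup.absorb2)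

lemma LIN: "i \<in> {1..n} \<Longrightarrow> i' \<in> {1..n} \<Longrightarrow> a \<noteq> b \<Longrightarrow> a \<in> X i \<Longrightarrow> b \<in> X i \<Longrightarrow> a \<in> X i' \<Longrightarrow> b \<in> X i' \<Longrightarrow> i = i'"
proof (rule ccontr)
  assume as: "i \<in> {1..n}" "i' \<in> {1..n}" "a \<noteq> b" "a \<in> X i" "b \<in> X i" "a \<in> X i'" "b \<in> X i'" "i \<noteq> i'"
  have "card (X i \<inter> X i') \<le> 1" using lin as by auto
  moreover have "card {a, b} \<le> card (X i \<inter> X i')" using as Xprop[of i] by (intro card_mono) auto
  ultimately show False using as by simp
qed

lemma Hpair: "i \<in> {1..n} \<Longrightarrow> a \<noteq> b \<Longrightarrow> a \<in> X i \<Longrightarrow> b \<in> X i \<Longrightarrow> H a \<inter> H b = {i}"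
  unfolding H_def using LIN by blast

lemma Hle: "a \<noteq> b \<Longrightarrow> card (H a \<inter> H b) \<le> 1"
proof (cases "H a \<inter> H b = {}")
  case False
  then obtain i where "i \<in> H a \<inter> H b" by auto
  moreover assume "a \<noteq> b"
  ultimately have "H a \<inter> H b = {i}" using Hpair unfolding H_def by auto
  thus ?thesis by simp
qed simp

lemma N3: "a \<noteq> b \<Longrightarrow> a \<noteq> c \<Longrightarrow> b \<noteq> c \<Longrightarrow> N {a, b, c} = int (card (H b \<inter> H c)) + int (card ((H a \<inter> H b) \<union> (H a \<inter> H c)))"
  using N_insert[of "{b,c}" a] N_insert[of "{c}" b] N_single[of c] by (simp add: Int_Un_distrib)

lemma N4: "a \<noteq> b \<Longrightarrow> a \<noteq> c \<Longrightarrow> a \<noteq> d \<Longrightarrow> b \<noteq> c \<Longrightarrow> b \<noteq> d \<Longrightarrow> c \<noteq> d \<Longrightarrow>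
   N {a, b, c, d} = N {b, c, d} + int (card ((H a \<inter> H b) \<union> (H a \<inter> H c) \<union> (H a \<inter> H d)))"
  using N_insert[of "{b,c,d}" a] by (simp add: Int_Un_distrib Un_assoc)

lemma card2: "card {a, b} \<le> 4" by (simp add: card_insert_if)
lemma card3: "card {a, b, c} \<le> 4" by (simp add: card_insert_if)
lemma card4: "card {a, b, c, d} \<le> 4" by (simp add: card_insert_if)

lemma par_count: "a \<noteq> b \<Longrightarrow> a \<in> E \<Longrightarrow> b \<in> E \<Longrightarrow> card {j\<in>{1..k}. par j a b} = card (H a \<inter> H b)"
proof -
  assume ab: "a \<noteq> b" "a \<in> E" "b \<in> E"
  have "(\<Sum>j\<in>{1..k}. D j {a, b}) = N {a, b}" using sumD[of "{a,b}"] ab card2[of a b] by auto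
  also have "N {a, b} = int (card (H a \<inter> H b))" using N_insert[of "{b}" a] N_single[of b] ab by simp
  also have "(\<Sum>j\<in>{1..k}. D j {a, b}) = (\<Sum>j\<in>{1..k}. of_bool (par j a b))"
    using D_pair ab by (intro sum.cong) auto
  also have "\<dots> = int (card ({1..k} \<inter> {j. par j a b}))" by simp
  also have "{1..k} \<inter> {j. par j a b} = {j\<in>{1..k}. par j a b}" by auto
  finally show ?thesis by simp
qed

lemma par_uniq: "j \<in> {1..k} \<Longrightarrow> j' \<in> {1..k} \<Longrightarrow> a \<noteq> b \<Longrightarrow> a \<in> E \<Longrightarrow> b \<in> E \<Longrightarrow> par j a b \<Longrightarrow> par j' a b \<Longrightarrow> j = j'"
proof -
  assume as: "j \<in> {1..k}" "j' \<in> {1..k}" "a \<noteq> b" "a \<in> E" "b \<in> E" "par j a b" "par j' a b"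
  have "card {j\<in>{1..k}. par j a b} \<le> Suc 0" using par_count[of a b] Hle[of a b] as by simp
  hence "\<forall>x\<in>{j\<in>{1..k}. par j a b}. \<forall>y\<in>{j\<in>{1..k}. par j a b}. x = y"
    by (subst card_le_Suc0_iff_eq[symmetric]) auto
  thus ?thesis using as by blast
qed

lemma par_ex: "i \<in> {1..n} \<Longrightarrow> a \<in> X i \<Longrightarrow> b \<in> X i \<Longrightarrow> a \<noteq> b \<Longrightarrow> \<exists>j\<in>{1..k}. par j a b"
proof -
  assume as: "i \<in> {1..n}" "a \<in> X i" "b \<in> X i" "a \<noteq> b"
  have E: "a \<in> E" "b \<in> E" using as Xprop by auto
  have "card {j\<in>{1..k}. par j a b} = 1" using par_count[OF as(4) E] Hpair[OF as(1,4,2,3)] by simp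
  hence "{j\<in>{1..k}. par j a b} \<noteq> {}" by (metis card.empty zero_neq_one)
  thus ?thesis by blast
qed

lemma par_cov: "j \<in> {1..k} \<Longrightarrow> a \<noteq> b \<Longrightarrow> a \<in> E \<Longrightarrow> b \<in> E \<Longrightarrow> par j a b \<Longrightarrow> \<exists>i\<in>{1..n}. a \<in> X i \<and> b \<in> X i"
proof -
  assume as: "j \<in> {1..k}" "a \<noteq> b" "a \<in> E" "b \<in> E" "par j a b"
  have "card {j\<in>{1..k}. par j a b} \<noteq> 0" using as by (subst card_0_eq) auto
  hence "H a \<inter> H b \<noteq> {}" using par_count[OF as(2-4)] by auto
  thus ?thesis unfolding H_def by auto
qed

lemma par_sym: "par j a b \<Longrightarrow> par j b a" unfolding par_def by (simp add: insert_commute)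

lemma par_nl: "par j a b \<Longrightarrow> r j {a} = 1" unfolding par_def by simp

lemma par_trans: "j \<in> {1..k} \<Longrightarrow> par j a b \<Longrightarrow> par j b c \<Longrightarrow> a \<noteq> c \<Longrightarrow> par j a c"
proof -
  assume as: "j \<in> {1..k}" "par j a b" "par j b c" "a \<noteq> c"
  have "r j ({a,b} \<union> {b,c}) + r j ({a,b} \<inter> {b,c}) \<le> r j {a,b} + r j {b,c}" using r_submod[OF as(1)] .
  moreover have "r j {b} \<le> r j ({a,b} \<inter> {b,c})" using r_mono[OF as(1)] by auto
  moreover have "r j {a,c} \<le> r j ({a,b} \<union> {b,c})" using r_mono[OF as(1)] by auto
  moreover have "r j {a} \<le> r j {a,c}" using r_mono[OF as(1)] by auto
  ultimately show ?thesis using as unfolding par_def by auto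
qed

lemma r_star: "j \<in> {1..k} \<Longrightarrow> a \<in> A \<Longrightarrow> r j A \<le> 1 \<Longrightarrow> par j a b \<Longrightarrow> r j (insert b A) \<le> 1"
proof -
  assume as: "j \<in> {1..k}" "a \<in> A" "r j A \<le> 1" "par j a b"
  have "r j (A \<union> {a,b}) + r j (A \<inter> {a,b}) \<le> r j A + r j {a,b}" using r_submod[OF as(1)] .
  moreover have "r j {a} \<le> r j (A \<inter> {a,b})" using r_mono[OF as(1)] as by auto
  moreover have "A \<union> {a,b} = insert b A" using as by auto
  ultimately show ?thesis using as unfolding par_def by auto
qed

lemma sum3: "(\<And>j. j \<in> {1..k} \<Longrightarrow> 0 \<le> f j) \<Longrightarrow> j1 \<in> {1..k} \<Longrightarrow> j2 \<in> {1..k} \<Longrightarrow> j3 \<in> {1..k} \<Longrightarrow>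
   j1 \<noteq> j2 \<Longrightarrow> j1 \<noteq> j3 \<Longrightarrow> j2 \<noteq> j3 \<Longrightarrow> f j1 + f j2 + f j3 \<le> (\<Sum>j\<in>{1..k}. (f j :: int))"
proof -
  assume as: "\<And>j. j \<in> {1..k} \<Longrightarrow> 0 \<le> f j" "j1 \<in> {1..k}" "j2 \<in> {1..k}" "j3 \<in> {1..k}"
    "j1 \<noteq> j2" "j1 \<noteq> j3" "j2 \<noteq> j3"
  have "(\<Sum>j\<in>{j1,j2,j3}. f j) \<le> (\<Sum>j\<in>{1..k}. f j)" using as by (intro sum_mono2) auto
  thus ?thesis using as by simp
qed

lemma sum2: "(\<And>j. j \<in> {1..k} \<Longrightarrow> 0 \<le> f j) \<Longrightarrow> j1 \<in> {1..k} \<Longrightarrow> j2 \<in> {1..k} \<Longrightarrow>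
   j1 \<noteq> j2 \<Longrightarrow> f j1 + f j2 \<le> (\<Sum>j\<in>{1..k}. (f j :: int))"
proof -
  assume as: "\<And>j. j \<in> {1..k} \<Longrightarrow> 0 \<le> f j" "j1 \<in> {1..k}" "j2 \<in> {1..k}" "j1 \<noteq> j2"
  have "(\<Sum>j\<in>{j1,j2}. f j) \<le> (\<Sum>j\<in>{1..k}. f j)" using as by (intro sum_mono2) auto
  thus ?thesis using as by simp
qed

lemma HE: assumes i: "i \<in> {1..n}" and abc: "a \<in> X i" "b \<in> X i" "c \<in> X i" "a \<noteq> b" "a \<noteq> c" "b \<noteq> c"
  and j: "j \<in> {1..k}" and p: "par j a b"
  shows "par j a c"
proof (rule ccontr)
  assume np: "\<not> par j a c"
  have E: "a \<in> E" "b \<in> E" "c \<in> E" using abc Xprop[OF i] by auto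
  obtain j2 where j2: "j2 \<in> {1..k}" "par j2 a c" using par_ex[OF i abc(1,3,5)] by auto
  obtain j3 where j3: "j3 \<in> {1..k}" "par j3 b c" using par_ex[OF i abc(2,3,6)] by auto
  have "j2 \<noteq> j" using np j2 by auto
  have "j3 \<noteq> j" using par_trans[OF j p _ abc(5)] j3 np by auto
  have "j3 \<noteq> j2"
  proof
    assume "j3 = j2"
    hence "par j2 c b" using par_sym[OF j3(2)] by simp
    hence "par j2 a b" using par_trans[OF j2(1) j2(2) _ abc(4)] by simp
    thus False using par_uniq[OF j j2(1) abc(4) E(1,2) p] \<open>j2 \<noteq> j\<close> by simp
  qed
  have fin: "finite {a,b,c}" by simp
  have d1: "1 \<le> D j {a,b,c}" using D_pair[OF j abc(4)] p D_mono[OF j _ fin, of "{a,b}"] by auto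
  have d2: "1 \<le> D j2 {a,b,c}" using D_pair[OF j2(1) abc(5)] j2 D_mono[OF j2(1) _ fin, of "{a,c}"] by auto
  have d3: "1 \<le> D j3 {a,b,c}" using D_pair[OF j3(1) abc(6)] j3 D_mono[OF j3(1) _ fin, of "{b,c}"] by auto
  have "D j {a,b,c} + D j2 {a,b,c} + D j3 {a,b,c} \<le> (\<Sum>j\<in>{1..k}. D j {a,b,c})"
    using D_nonneg fin j j2 j3 \<open>j2 \<noteq> j\<close> \<open>j3 \<noteq> j\<close> \<open>j3 \<noteq> j2\<close> by (intro sum3) auto
  also have "\<dots> = N {a,b,c}" using sumD[of "{a,b,c}"] E card3[of a b c] by auto
  also have "\<dots> = 2" using N3[OF abc(4-6)] Hpair[OF i] abc by simp
  finally show False using d1 d2 d3 by simp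
qed

definition allpar :: "nat \<Rightarrow> nat \<Rightarrow> bool" where
  "allpar j i \<longleftrightarrow> (\<forall>a\<in>X i. \<forall>b\<in>X i. a \<noteq> b \<longrightarrow> par j a b)"

lemma TC:
  assumes i0: "i0 \<in> {1..n}" and i1: "i1 \<in> {1..n}" and i2: "i2 \<in> {1..n}"
    and dis: "e \<noteq> f" "e \<noteq> g" "f \<noteq> g"
    and mem: "e \<in> X i0" "f \<in> X i0" "e \<in> X i1" "g \<in> X i1" "f \<in> X i2" "g \<in> X i2"
    and nmem: "g \<notin> X i0" "f \<notin> X i1" "e \<notin> X i2"
    and j: "j \<in> {1..k}" and ap: "allpar j i0" and peg: "par j e g" and pfg: "par j f g"
    and x: "x \<in> X i0" "x \<noteq> e" "x \<noteq> f"
  shows False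
proof -
  have xg: "x \<noteq> g" using x nmem by auto
  have E: "e \<in> E" "f \<in> E" "g \<in> E" "x \<in> E" using mem x Xprop i0 i1 by auto
  have pef: "par j e f" and pex: "par j e x" and pfx: "par j f x"
    using ap mem x dis unfolding allpar_def by auto
  have pxg: "par j x g" using par_trans[OF j par_sym[OF pex] peg xg] .
  obtain i3 where i3: "i3 \<in> {1..n}" "x \<in> X i3" "g \<in> X i3" using par_cov[OF j xg E(4,3) pxg] by auto
  have e3: "e \<notin> X i3" using LIN[OF i0 i3(1), of e x] mem x nmem i3 by auto
  have f3: "f \<notin> X i3" using LIN[OF i0 i3(1), of f x] mem x nmem i3 by auto
  have x1: "x \<notin> X i1" using LIN[OF i0 i1, of e x] mem x nmem by auto
  have x2: "x \<notin> X i2" using LIN[OF i0 i2, of f x] mem x nmem by auto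
  have H1: "H e \<inter> H f = {i0}" "H e \<inter> H x = {i0}" "H f \<inter> H x = {i0}"
    "H e \<inter> H g = {i1}" "H f \<inter> H g = {i2}" "H x \<inter> H g = {i3}"
    using Hpair[OF i0, of e f] Hpair[OF i0, of e x] Hpair[OF i0, of f x]
      Hpair[OF i1, of e g] Hpair[OF i2, of f g] Hpair[OF i3(1), of x g] mem x dis xg i3 by auto
  have dI: "i0 \<noteq> i1" "i0 \<noteq> i2" "i0 \<noteq> i3" "i1 \<noteq> i2" "i1 \<noteq> i3" "i2 \<noteq> i3"
    using mem nmem i3 e3 f3 by metis+
  have Nefx: "N {e,f,x} = 2" using N3[of e f x] dis x H1 by simp
  have Nefg: "N {e,f,g} = 3" using N3[of e f g] dis H1 dI by simp
  have Nexg: "N {e,x,g} = 3" using N3[of e x g] dis x xg H1 dI by simp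
  have Nfxg: "N {f,x,g} = 3" using N3[of f x g] dis x xg H1 dI by simp
  have N4v: "N {e,f,x,g} = 5" using N4[of e f x g] Nfxg dis x xg H1 dI by simp
  have fin: "finite {e,f,x,g}" by simp
  have sub: "{e,f,x,g} \<subseteq> E" using E by auto
  have S1: "(\<Sum>j\<in>{1..k}. D j {e,f,x}) = 2" using sumD[of "{e,f,x}"] E card3[of e f x] Nefx by auto
  have S2: "(\<Sum>j\<in>{1..k}. D j {e,f,g}) = 3" using sumD[of "{e,f,g}"] E card3[of e f g] Nefg by auto
  have S3: "(\<Sum>j\<in>{1..k}. D j {e,x,g}) = 3" using sumD[of "{e,x,g}"] E card3[of e x g] Nexg by auto
  have S4: "(\<Sum>j\<in>{1..k}. D j {f,x,g}) = 3" using sumD[of "{f,x,g}"] E card3[of f x g] Nfxg by auto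
  have S5: "(\<Sum>j\<in>{1..k}. D j {e,f,x,g}) = 5" using sumD[of "{e,f,x,g}"] E card4[of e f x g] N4v by auto
  have nl: "r j {e} = 1" "r j {f} = 1" "r j {g} = 1" "r j {x} = 1"
    using pef pfg pxg par_nl par_sym by metis+
  have "r j {e,f} \<le> 1" using pef unfolding par_def by simp
  hence "r j (insert x {e,f}) \<le> 1" using r_star[OF j, of e "{e,f}" x] pex by simp
  hence "r j (insert g (insert x {e,f})) \<le> 1" using r_star[OF j, of e "insert x {e,f}" g] peg by simp
  moreover have "insert g (insert x {e,f}) = {e,f,x,g}" by auto
  ultimately have r4: "r j {e,f,x,g} \<le> 1" by simp
  have rS: "r j S \<le> 1" if "S \<subseteq> {e,f,x,g}" for S using r_mono[OF j that] r4 by simp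
  have Dj4: "3 \<le> D j {e,f,x,g}" using rS[of "{e,f,x,g}"] nl dis x xg unfolding D_def by simp
  have Dj1: "2 \<le> D j {e,f,x}" using rS[of "{e,f,x}"] nl dis x xg unfolding D_def by simp
  have re: "1 \<le> r j {e,f,g}" "1 \<le> r j {e,x,g}" "1 \<le> r j {f,x,g}"
    using r_mono[OF j, of "{e}" "{e,f,g}"] r_mono[OF j, of "{e}" "{e,x,g}"] r_mono[OF j, of "{f}" "{f,x,g}"] nl by auto
  have Dj2: "D j {e,f,g} \<le> 2" "D j {e,x,g} \<le> 2" "D j {f,x,g} \<le> 2"
    using re nl dis x xg unfolding D_def by simp_all
  let ?Z = "{1..k} - {j}"
  have per: "D j' {e,f,g} + D j' {e,x,g} + D j' {f,x,g} \<le> D j' {e,f,x,g}" if j': "j' \<in> ?Z" for j'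
  proof -
    have j'k: "j' \<in> {1..k}" and jj: "j' \<noteq> j" using j' by auto
    have a: "D j' {e,f,x} \<le> 0" using sum2[of "\<lambda>j. D j {e,f,x}" j j'] D_nonneg S1 Dj1 j j'k jj by force
    have "D j' (insert g {e,f,x}) \<le> D j' {e,f,x} + 1" using D_insert[OF j'k, of "{e,f,x}" g] dis xg by auto
    moreover have "insert g {e,f,x} = {e,f,x,g}" by auto
    ultimately have b: "D j' {e,f,x,g} \<le> 1" using a by simp
    have np: "\<not> par j' e g" "\<not> par j' f g" "\<not> par j' x g"
      using par_uniq[OF j j'k, of e g] par_uniq[OF j j'k, of f g] par_uniq[OF j j'k, of x g]
        peg pfg pxg E dis xg jj by auto
    have c: "D j' {e,g} = 0" "D j' {f,g} = 0" "D j' {x,g} = 0"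
      using D_pair[OF j'k] np dis xg by auto
    have u1: "{e,f,g} \<union> {e,x,g} = {e,f,x,g}" "{e,f,g} \<inter> {e,x,g} = {e,g}" using dis x xg by auto
    have u2: "{e,f,g} \<union> {f,x,g} = {e,f,x,g}" "{e,f,g} \<inter> {f,x,g} = {f,g}" using dis x xg by auto
    have u3: "{e,x,g} \<union> {f,x,g} = {e,f,x,g}" "{e,x,g} \<inter> {f,x,g} = {x,g}" using dis x xg by auto
    have d1: "D j' {e,f,g} + D j' {e,x,g} \<le> D j' {e,f,x,g}"
      using D_super[OF j'k, of "{e,f,g}" "{e,x,g}"] u1 c by simp
    have d2: "D j' {e,f,g} + D j' {f,x,g} \<le> D j' {e,f,x,g}"
      using D_super[OF j'k, of "{e,f,g}" "{f,x,g}"] u2 c by simp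
    have d3: "D j' {e,x,g} + D j' {f,x,g} \<le> D j' {e,f,x,g}"
      using D_super[OF j'k, of "{e,x,g}" "{f,x,g}"] u3 c by simp
    have nn: "0 \<le> D j' {e,f,g}" "0 \<le> D j' {e,x,g}" "0 \<le> D j' {f,x,g}" using D_nonneg[OF j'k] by auto
    show ?thesis using b d1 d2 d3 nn by linarith
  qed
  have "(\<Sum>j'\<in>?Z. D j' {e,f,g} + D j' {e,x,g} + D j' {f,x,g}) \<le> (\<Sum>j'\<in>?Z. D j' {e,f,x,g})"
    using per by (intro sum_mono) auto
  moreover have "(\<Sum>j'\<in>?Z. D j' {e,f,g} + D j' {e,x,g} + D j' {f,x,g}) =
     (\<Sum>j'\<in>?Z. D j' {e,f,g}) + (\<Sum>j'\<in>?Z. D j' {e,x,g}) + (\<Sum>j'\<in>?Z. D j' {f,x,g})"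
    by (simp add: sum.distrib)
  moreover have R: "\<And>S. (\<Sum>j\<in>{1..k}. D j S) = D j S + (\<Sum>j'\<in>?Z. D j' S)"
    using j by (intro sum.remove) auto
  ultimately show False using S2 S3 S4 S5 Dj2 Dj4
    R[of "{e,f,g}"] R[of "{e,x,g}"] R[of "{f,x,g}"] R[of "{e,f,x,g}"] by linarith
qed

lemma allpar_ex: assumes i: "i \<in> {1..n}" and ab: "a \<in> X i" "b \<in> X i" "a \<noteq> b"
  shows "\<exists>j\<in>{1..k}. allpar j i"
proof -
  obtain j where j: "j \<in> {1..k}" "par j a b" using par_ex[OF i ab(1,2,3)] by auto
  have pa: "par j a c" if "c \<in> X i" "c \<noteq> a" for c
  proof (cases "c = b")
    case True thus ?thesis using j by simp
  next
    case False thus ?thesis using HE[OF i ab(1,2) that(1) ab(3) _ _ j(1) j(2)] that by auto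
  qed
  have "allpar j i" unfolding allpar_def
  proof (intro ballI impI)
    fix a' b' assume ab': "a' \<in> X i" "b' \<in> X i" "a' \<noteq> b'"
    show "par j a' b'"
    proof (cases "a' = a")
      case True thus ?thesis using pa ab' by auto
    next
      case F1: False
      show ?thesis
      proof (cases "b' = a")
        case True thus ?thesis using pa[of a'] ab' F1 par_sym by auto
      next
        case False
        thus ?thesis using par_trans[OF j(1) par_sym[OF pa[of a']] pa[of b'] ab'(3)] ab' F1 by auto
      qed
    qed
  qed
  thus ?thesis using j by auto
qed

lemma allpar_uniq: "i \<in> {1..n} \<Longrightarrow> a \<in> X i \<Longrightarrow> b \<in> X i \<Longrightarrow> a \<noteq> b \<Longrightarrow> j \<in> {1..k} \<Longrightarrow> j' \<in> {1..k} \<Longrightarrow>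
   allpar j i \<Longrightarrow> allpar j' i \<Longrightarrow> j = j'"
  unfolding allpar_def using par_uniq Xprop by blast

definition nonsing :: "nat \<Rightarrow> bool" where "nonsing i \<longleftrightarrow> (\<exists>a\<in>X i. \<exists>b\<in>X i. a \<noteq> b)"

definition colN :: "nat \<Rightarrow> nat" where "colN i = (THE j. j \<in> {1..k} \<and> allpar j i)"

lemma colN: assumes i: "i \<in> {1..n}" and ns: "nonsing i" shows "colN i \<in> {1..k} \<and> allpar (colN i) i"
proof -
  obtain a b where ab: "a \<in> X i" "b \<in> X i" "a \<noteq> b" using ns unfolding nonsing_def by auto
  obtain j where j: "j \<in> {1..k}" "allpar j i" using allpar_ex[OF i ab] by auto
  have "\<exists>!j. j \<in> {1..k} \<and> allpar j i" using j allpar_uniq[OF i ab] by blast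
  thus ?thesis unfolding colN_def by (rule theI')
qed

lemma colN_eq: "i \<in> {1..n} \<Longrightarrow> a \<in> X i \<Longrightarrow> b \<in> X i \<Longrightarrow> a \<noteq> b \<Longrightarrow> j \<in> {1..k} \<Longrightarrow> par j a b \<Longrightarrow> colN i = j"
proof -
  assume as: "i \<in> {1..n}" "a \<in> X i" "b \<in> X i" "a \<noteq> b" "j \<in> {1..k}" "par j a b"
  have ns: "nonsing i" using as unfolding nonsing_def by auto
  have "par (colN i) a b" using colN[OF as(1) ns] as unfolding allpar_def by auto
  thus ?thesis using par_uniq[OF _ as(5) as(4) _ _ _ as(6)] colN[OF as(1) ns] as Xprop by auto
qed

lemma sing: "i \<in> {1..n} \<Longrightarrow> \<not> nonsing i \<Longrightarrow> X i = {the_elem (X i)}"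
proof -
  assume i: "i \<in> {1..n}" and ns: "\<not> nonsing i"
  obtain a where a: "a \<in> X i" using Xprop[OF i] by auto
  hence "X i = {a}" using ns unfolding nonsing_def by auto
  thus ?thesis by simp
qed

definition colS :: "nat \<Rightarrow> nat" where
  "colS i = (SOME j. j \<in> {1..k} \<and> r j {the_elem (X i)} = 1 \<and>
      (\<forall>i'\<in>{1..n}. i' \<noteq> i \<and> the_elem (X i) \<in> X i' \<longrightarrow> colN i' \<noteq> j))"

lemma r01: "j \<in> {1..k} \<Longrightarrow> r j {a} = of_bool (r j {a} = 1)"
  using r_nonneg[of j "{a}"] r_single[of j a] by auto

lemma colS: assumes i: "i \<in> {1..n}" and ns: "\<not> nonsing i"
  shows "colS i \<in> {1..k} \<and> r (colS i) {the_elem (X i)} = 1 \<and>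
      (\<forall>i'\<in>{1..n}. i' \<noteq> i \<and> the_elem (X i) \<in> X i' \<longrightarrow> colN i' \<noteq> colS i)"
proof -
  define e where "e = the_elem (X i)"
  have Xi: "X i = {e}" using sing[OF i ns] unfolding e_def .
  have eE: "e \<in> E" using Xprop[OF i] Xi by auto
  define L where "L = {j\<in>{1..k}. r j {e} = 1}"
  have "(\<Sum>j\<in>{1..k}. r j {e}) = int (card (H e))" using trunc_small[of "{e}"] eE by simp
  moreover have "(\<Sum>j\<in>{1..k}. r j {e}) = (\<Sum>j\<in>{1..k}. of_bool (r j {e} = 1))"
    using r01 by (intro sum.cong) auto
  moreover have "\<dots> = int (card ({1..k} \<inter> {j. r j {e} = 1}))" by simp
  moreover have "{1..k} \<inter> {j. r j {e} = 1} = L" unfolding L_def by auto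
  ultimately have cL: "card L = card (H e)" by simp
  define C where "C = colN ` (H e - {i})"
  have iH: "i \<in> H e" unfolding H_def using i Xi by auto
  have "card C \<le> card (H e - {i})" unfolding C_def using H_fin by (intro card_image_le) auto
  also have "\<dots> < card (H e)" using iH H_fin[of e] by (meson card_Diff1_less)
  finally have "card C < card L" using cL by simp
  moreover have "finite L" unfolding L_def by auto
  moreover have "finite C" unfolding C_def using H_fin by auto
  ultimately have "\<not> L \<subseteq> C" using card_mono[of C L] by linarith
  then obtain j where j: "j \<in> L" "j \<notin> C" by auto
  have P: "j \<in> {1..k} \<and> r j {e} = 1 \<and> (\<forall>i'\<in>{1..n}. i' \<noteq> i \<and> e \<in> X i' \<longrightarrow> colN i' \<noteq> j)"
    using j unfolding L_def C_def H_def by auto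
  show ?thesis unfolding colS_def e_def[symmetric] using someI[where P="\<lambda>j. j \<in> {1..k} \<and> r j {e} = 1 \<and> (\<forall>i'\<in>{1..n}. i' \<noteq> i \<and> e \<in> X i' \<longrightarrow> colN i' \<noteq> j)", OF P] by blast
qed

definition col :: "nat \<Rightarrow> nat" where "col i = (if nonsing i then colN i else colS i)"

lemma col_range: "i \<in> {1..n} \<Longrightarrow> col i \<in> {1..k}"
  unfolding col_def using colN colS by auto

lemma NN: assumes i: "i \<in> {1..n}" and i': "i' \<in> {1..n}" and ii: "i \<noteq> i'"
  and e: "e \<in> X i" "e \<in> X i'" and ns: "nonsing i" "nonsing i'" and eq: "colN i = colN i'"
  shows False
proof -
  define j where "j = colN i"
  have j: "j \<in> {1..k}" "allpar j i" "allpar j i'" using colN[OF i ns(1)] colN[OF i' ns(2)] eq j_def by auto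
  obtain f where f: "f \<in> X i" "f \<noteq> e" using ns(1) unfolding nonsing_def by metis
  obtain g where g: "g \<in> X i'" "g \<noteq> e" using ns(2) unfolding nonsing_def by metis
  have E: "e \<in> E" "f \<in> E" "g \<in> E" using Xprop i i' e f g by auto
  have pef: "par j e f" using j f e unfolding allpar_def by auto
  have peg: "par j e g" using j g e unfolding allpar_def by auto
  have fg: "f \<noteq> g" using LIN[OF i i', of e f] e f g ii by auto
  have gi: "g \<notin> X i" using LIN[OF i i', of e g] e g ii by auto
  have fi': "f \<notin> X i'" using LIN[OF i i', of e f] e f ii by auto
  have pfg: "par j f g" using par_trans[OF j(1) par_sym[OF pef] peg fg] .
  obtain i'' where i'': "i'' \<in> {1..n}" "f \<in> X i''" "g \<in> X i''" using par_cov[OF j(1) fg E(2,3) pfg] by auto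
  have ei'': "e \<notin> X i''" using LIN[OF i i''(1), of e f] e f i'' gi by auto
  have "colN i'' = j" using colN_eq[OF i''(1) i''(2,3) fg j(1) pfg] .
  hence j'': "allpar j i''" using colN[OF i''(1)] i'' fg unfolding nonsing_def by fastforce
  show False
  proof (cases "\<exists>x\<in>X i. x \<noteq> e \<and> x \<noteq> f")
    case True
    then obtain x where "x \<in> X i" "x \<noteq> e" "x \<noteq> f" by auto
    thus False using TC[OF i i' i''(1) not_sym[OF f(2)] not_sym[OF g(2)] fg e(1) f(1) e(2) g(1) i''(2) i''(3)
       gi fi' ei'' j(1) j(2) peg pfg] by blast
  next
    case F1: False
    show False
    proof (cases "\<exists>x\<in>X i'. x \<noteq> e \<and> x \<noteq> g")
      case True
      then obtain x where "x \<in> X i'" "x \<noteq> e" "x \<noteq> g" by auto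
      thus False using TC[OF i' i i''(1) not_sym[OF g(2)] not_sym[OF f(2)] not_sym[OF fg] e(2) g(1) e(1) f(1) i''(3) i''(2)
       fi' gi ei'' j(1) j(3) pef par_sym[OF pfg]] by blast
    next
      case F2: False
      show False
      proof (cases "\<exists>x\<in>X i''. x \<noteq> f \<and> x \<noteq> g")
        case True
        then obtain x where "x \<in> X i''" "x \<noteq> f" "x \<noteq> g" by auto
        thus False using TC[OF i''(1) i i' fg f(2) g(2) i''(2) i''(3) f(1) e(1) g(1) e(2)
         ei'' gi fi' j(1) j'' par_sym[OF pef] par_sym[OF peg]] by blast
      next
        case F3: False
        have "X i = {e,f}" using F1 e f by auto
        moreover have "X i' = {e,g}" using F2 e g by auto
        moreover have "X i'' = {f,g}" using F3 i'' by auto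
        ultimately have "{e,f} \<in> X ` {1..n}" "{e,g} \<in> X ` {1..n}" "{f,g} \<in> X ` {1..n}"
          using i i' i''(1) by (metis image_eqI)+
        thus False using notri E not_sym[OF f(2)] not_sym[OF g(2)] fg by blast
      qed
    qed
  qed
qed

lemma col_proper: assumes i: "i \<in> {1..n}" and i': "i' \<in> {1..n}" and ii: "i \<noteq> i'"
  and e: "e \<in> X i" "e \<in> X i'" shows "col i \<noteq> col i'"
proof (cases "nonsing i")
  case T1: True
  show ?thesis
  proof (cases "nonsing i'")
    case True thus ?thesis using NN[OF i i' ii e T1 True] T1 unfolding col_def by auto
  next
    case False
    have "the_elem (X i') = e" using sing[OF i' False] e by (metis singletonD)
    thus ?thesis using colS[OF i' False] i ii e T1 False unfolding col_def by auto
  qed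
next
  case F1: False
  show ?thesis
  proof (cases "nonsing i'")
    case True
    have "the_elem (X i) = e" using sing[OF i F1] e by (metis singletonD)
    thus ?thesis using colS[OF i F1] i' ii e True F1 unfolding col_def by auto
  next
    case False
    have "X i = X i'" using sing[OF i F1] sing[OF i' False] e by (metis singletonD)
    moreover have "inj_on X {1..n}" using hyp unfolding hypergraph_def by auto
    ultimately show ?thesis using i i' ii by (meson inj_onD)
  qed
qed

lemma proper: "proper_coloring n X k col"
  unfolding proper_coloring_def line_adj_def using col_range col_proper by blast

lemma witness: "i \<in> {1..n} \<Longrightarrow> \<exists>e\<in>X i. r (col i) {e} = 1"
proof -
  assume i: "i \<in> {1..n}"
  show ?thesis
  proof (cases "nonsing i")
    case True
    then obtain a b where ab: "a \<in> X i" "b \<in> X i" "a \<noteq> b" unfolding nonsing_def by auto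
    hence "par (colN i) a b" using colN[OF i True] unfolding allpar_def by auto
    thus ?thesis using ab True par_nl unfolding col_def by auto
  next
    case False
    thus ?thesis using colS[OF i False] sing[OF i False] unfolding col_def by (metis singletonI)
  qed
qed

lemma cls1: "i \<in> {1..n} \<Longrightarrow> 1 \<le> r (col i) E"
proof -
  assume i: "i \<in> {1..n}"
  obtain e where e: "e \<in> X i" "r (col i) {e} = 1" using witness[OF i] by auto
  have "{e} \<subseteq> E" using e Xprop[OF i] by auto
  hence "r (col i) {e} \<le> r (col i) E" using r_mono[OF col_range[OF i]] by blast
  thus ?thesis using e by simp
qed

lemma cls2: assumes i: "i \<in> {1..n}" and i': "i' \<in> {1..n}" and ii: "i \<noteq> i'" and c: "col i = col i'"
  shows "2 \<le> r (col i) E"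
proof -
  define j where "j = col i"
  have j: "j \<in> {1..k}" using col_range[OF i] j_def by simp
  obtain e where e: "e \<in> X i" "r j {e} = 1" using witness[OF i] j_def by auto
  obtain e' where e': "e' \<in> X i'" "r j {e'} = 1" using witness[OF i'] j_def c by auto
  have disj: "X i \<inter> X i' = {}" using col_proper[OF i i' ii] c by blast
  hence ee: "e \<noteq> e'" using e e' by auto
  have E: "e \<in> E" "e' \<in> E" using e e' Xprop i i' by auto
  have "2 \<le> r j {e, e'}"
  proof (rule ccontr)
    assume "\<not> 2 \<le> r j {e, e'}"
    moreover have "r j {e} \<le> r j {e,e'}" using r_mono[OF j] by auto
    ultimately have "par j e e'" unfolding par_def using e e' by auto
    then obtain i'' where i'': "i'' \<in> {1..n}" "e \<in> X i''" "e' \<in> X i''" using par_cov[OF j ee E] by auto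
    have "colN i'' = j" using colN_eq[OF i'' ee j \<open>par j e e'\<close>] .
    moreover have "nonsing i''" using i'' ee unfolding nonsing_def by auto
    ultimately have c2: "col i'' = j" unfolding col_def by simp
    have "i \<noteq> i''" using disj e' i'' by auto
    hence "col i \<noteq> col i''" using col_proper[OF i i''(1) _ e(1) i''(2)] by blast
    thus False using c2 j_def by simp
  qed
  moreover have "r j {e,e'} \<le> r j E" using r_mono[OF j] E by auto
  ultimately show ?thesis using j_def by simp
qed

lemma two_elems: "finite S \<Longrightarrow> 2 \<le> card S \<Longrightarrow> \<exists>a\<in>S. \<exists>b\<in>S. a \<noteq> b"
proof (rule ccontr)
  assume "finite S" "2 \<le> card S" "\<not> (\<exists>a\<in>S. \<exists>b\<in>S. a \<noteq> b)"
  hence "card S \<le> Suc 0" using card_le_Suc0_iff_eq by blast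
  thus False using \<open>2 \<le> card S\<close> by simp
qed

lemma main: "\<exists>c. proper_coloring n X k c \<and> s \<ge> int (color_c1 n k c) + 2 * int (color_c2plus n k c)"
proof (intro exI conjI)
  show "proper_coloring n X k col" by (rule proper)
  define cl where "cl j = {i\<in>{1..n}. col i = j}" for j
  define w where "w j = (of_bool (card (cl j) = 1) + 2 * of_bool (card (cl j) \<ge> 2) :: int)" for j :: nat
  have wle: "w j \<le> r j E" if j: "j \<in> {1..k}" for j
  proof -
    have f: "finite (cl j)" unfolding cl_def by auto
    show ?thesis
    proof (cases "card (cl j) = 1")
      case True
      then obtain i where "i \<in> cl j" by (metis card_1_singletonE singletonI)
      thus ?thesis using cls1[of i] True unfolding w_def cl_def by auto
    next
      case F: False
      show ?thesis
      proof (cases "2 \<le> card (cl j)")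
        case True
        then obtain i i' where "i \<in> cl j" "i' \<in> cl j" "i \<noteq> i'" using two_elems[OF f] by auto
        thus ?thesis using cls2[of i i'] True F unfolding w_def cl_def by auto
      next
        case False thus ?thesis using F r_nonneg unfolding w_def by auto
      qed
    qed
  qed
  have "(\<Sum>j\<in>{1..k}. w j) = (\<Sum>j\<in>{1..k}. of_bool (card (cl j) = 1)) + 2 * (\<Sum>j\<in>{1..k}. of_bool (card (cl j) \<ge> 2))"
    unfolding w_def by (simp add: sum.distrib sum_distrib_left)
  also have "\<dots> = int (card ({1..k} \<inter> {j. card (cl j) = 1})) + 2 * int (card ({1..k} \<inter> {j. card (cl j) \<ge> 2}))"
    by simp
  also have "{1..k} \<inter> {j. card (cl j) = 1} = {l\<in>{1..k}. card {i\<in>{1..n}. col i = l} = 1}" unfolding cl_def by auto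
  also have "{1..k} \<inter> {j. card (cl j) \<ge> 2} = {l\<in>{1..k}. card {i\<in>{1..n}. col i = l} \<ge> 2}" unfolding cl_def by auto
  finally have "(\<Sum>j\<in>{1..k}. w j) = int (color_c1 n k col) + 2 * int (color_c2plus n k col)"
    unfolding color_c1_def color_c2plus_def by simp
  moreover have "(\<Sum>j\<in>{1..k}. w j) \<le> (\<Sum>j\<in>{1..k}. r j E)" using wle by (intro sum_mono) auto
  ultimately show "s \<ge> int (color_c1 n k col) + 2 * int (color_c2plus n k col)" using trunc_E by simp
qed
end


lemma recolor:
  assumes pc: "proper_coloring n X k c"
  shows "chromatic_number n X \<le> color_c1 n k c + color_c2plus n k c"
proof -
  define cl where "cl l = {i\<in>{1..n}. c i = l}" for l
  define U where "U = {l\<in>{1..k}. cl l \<noteq> {}}"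
  have finU: "finite U" unfolding U_def by auto
  have fcl: "finite (cl l)" for l unfolding cl_def by auto
  have eqv: "(card (cl l) = 1 \<or> card (cl l) \<ge> 2) \<longleftrightarrow> cl l \<noteq> {}" for l
  proof -
    have "cl l \<noteq> {} \<longleftrightarrow> card (cl l) \<noteq> 0" using fcl[of l] card_0_eq[of "cl l"] by auto
    thus ?thesis by linarith
  qed
  have "{l\<in>{1..k}. card (cl l) = 1} \<union> {l\<in>{1..k}. card (cl l) \<ge> 2} = U"
    unfolding U_def using eqv by blast
  moreover have "{l\<in>{1..k}. card (cl l) = 1} \<inter> {l\<in>{1..k}. card (cl l) \<ge> 2} = {}" by auto
  ultimately have "card {l\<in>{1..k}. card (cl l) = 1} + card {l\<in>{1..k}. card (cl l) \<ge> 2} = card U"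
    using card_Un_disjoint[of "{l\<in>{1..k}. card (cl l) = 1}" "{l\<in>{1..k}. card (cl l) \<ge> 2}"] by simp
  hence cU: "color_c1 n k c + color_c2plus n k c = card U"
    unfolding color_c1_def color_c2plus_def cl_def by simp
  define c' where "c' i = card {l\<in>U. l \<le> c i}" for i
  have cinU: "c i \<in> U" if "i \<in> {1..n}" for i
    using pc that unfolding proper_coloring_def U_def cl_def by auto
  have "proper_coloring n X (card U) c'"
    unfolding proper_coloring_def
  proof (intro conjI ballI impI)
    fix i assume i: "i \<in> {1..n}"
    have "c i \<in> {l\<in>U. l \<le> c i}" using cinU[OF i] by auto
    moreover have "finite {l\<in>U. l \<le> c i}" using finU by simp
    ultimately have "1 \<le> c' i" unfolding c'_def by (metis One_nat_def Suc_leI card_gt_0_iff empty_iff)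
    moreover have "c' i \<le> card U" unfolding c'_def using finU by (intro card_mono) auto
    ultimately show "c' i \<in> {1..card U}" by simp
  next
    fix i j assume i: "i \<in> {1..n}" and j: "j \<in> {1..n}" and adj: "line_adj X i j"
    have ne: "c i \<noteq> c j" using pc i j adj unfolding proper_coloring_def by auto
    have lt: "c' a < c' b" if "a \<in> {1..n}" "b \<in> {1..n}" "c a < c b" for a b
    proof -
      have "c b \<in> {l\<in>U. l \<le> c b}" "c b \<notin> {l\<in>U. l \<le> c a}" using that cinU[OF that(2)] by auto
      moreover have "{l\<in>U. l \<le> c a} \<subseteq> {l\<in>U. l \<le> c b}" using that by auto
      ultimately have "{l\<in>U. l \<le> c a} \<subset> {l\<in>U. l \<le> c b}" by blast
      thus ?thesis unfolding c'_def using finU by (intro psubset_card_mono) auto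
    qed
    show "c' i \<noteq> c' j" using ne lt[OF i j] lt[OF j i] by (metis less_irrefl linorder_neq_iff)
  qed
  hence "chromatic_number n X \<le> card U" unfolding chromatic_number_def by (intro Least_le) auto
  thus ?thesis using cU by simp
qed

theorem corollary2p12:
  fixes E :: "'a set" and n :: nat and X :: "nat \<Rightarrow> 'a set" and s :: int
  assumes hyp: "hypergraph E n X"
    and lin: "\<forall>i\<in>{1..n}. \<forall>j\<in>{1..n}. i \<noteq> j \<longrightarrow> card (X i \<inter> X j) \<le> 1"
    and notri: "\<not> (\<exists>a\<in>E. \<exists>b\<in>E. \<exists>c\<in>E. a \<noteq> b \<and> a \<noteq> c \<and> b \<noteq> c \<and>
                   {a, b} \<in> X ` {1..n} \<and> {a, c} \<in> X ` {1..n} \<and> {b, c} \<in> X ` {1..n})"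
    and s_lower: "\<forall>A. A \<subseteq> E \<and> card A \<le> 4 \<longrightarrow> hyp_rho n X A \<le> s"
    and s_upper: "s < hyp_rho n X E"
  shows "(\<forall>k. k_decomposable E (truncation (hyp_rho n X) s) k \<longrightarrow>
            (\<exists>c. proper_coloring n X k c \<and>
                 s \<ge> int (color_c1 n k c) + 2 * int (color_c2plus n k c)))
         \<and> (s < int (chromatic_number n X) \<longrightarrow> indecomposable E (truncation (hyp_rho n X) s))"
proof -
  have P1: "\<forall>k. k_decomposable E (truncation (hyp_rho n X) s) k \<longrightarrow>
            (\<exists>c. proper_coloring n X k c \<and>
                 s \<ge> int (color_c1 n k c) + 2 * int (color_c2plus n k c))"
  proof (intro allI impI)
    fix k assume "k_decomposable E (truncation (hyp_rho n X) s) k"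
    then obtain M where M: "\<forall>j\<in>{1..k}. matroid E (M j)"
      "\<forall>Y. Y \<subseteq> E \<longrightarrow> truncation (hyp_rho n X) s Y = (\<Sum>j\<in>{1..k}. matroid_rank (M j) Y)"
      unfolding k_decomposable_def by blast
    interpret dec E n X s k M using hyp lin notri s_lower s_upper M by unfold_locales
    show "\<exists>c. proper_coloring n X k c \<and> s \<ge> int (color_c1 n k c) + 2 * int (color_c2plus n k c)"
      by (rule main)
  qed
  moreover have "s < int (chromatic_number n X) \<longrightarrow> indecomposable E (truncation (hyp_rho n X) s)"
  proof
    assume sl: "s < int (chromatic_number n X)"
    show "indecomposable E (truncation (hyp_rho n X) s)" unfolding indecomposable_def
    proof (intro allI notI)
      fix k assume "k_decomposable E (truncation (hyp_rho n X) s) k"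
      then obtain c where c: "proper_coloring n X k c" "s \<ge> int (color_c1 n k c) + 2 * int (color_c2plus n k c)"
        using P1 by blast
      have "chromatic_number n X \<le> color_c1 n k c + color_c2plus n k c" by (rule recolor[OF c(1)])
      thus False using c(2) sl by linarith
    qed
  qed
  ultimately show ?thesis by blast
qed

end
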